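(* Let $(G,d(\cdot))$ be piecewise $\mathcal C^1$ with continuous reflection and let $\mathcal V\subset\partial G$ satisfy Assumption 2'. For each $x\in\partial G\setminus\mathcal V$ there exist $0<r_x<\mathrm{dist}\big(x,\mathcal V\cup\bigcup_{i\notin\mathcal I(x)}(\partial G\cap\partial G_i)\big)$, $A_x\in(0,\infty)$, and a family of nonnegative functions $\{g_{x,r}\in\mathcal C^2_c(\overline G):r\in(0,r_x]\}$ such that: (1) $\mathrm{supp}[g_{x,r}]\cap\overline G\subset B_r(x)\cap\overline G$; (2) $g_{x,r}(y)=1$ for each $y\in B_{\delta_{x,r}}(x)\cap\overline G$, for some constant $\delta_{x,r}>0$; (3) for $r\in(0,r_x)$, $\sup_{y\in\overline G}|g_{x,r}(y)|\le A_x$, $\sup_{y\in\overline G}|\nabla g_{x,r}(y)|\le A_x/r$, $\sup_{y\in\overline G}\sum_{i,j=1}^J\big|\frac{\partial^2g_{x,r}(y)}{\partial y_i\partial y_j}\big|<A_x/r^2$; (4) $\langle d,\nabla g_{x,r}(y)\rangle\le0$ for all $d\in d(y)$ and $y\in\partial G$.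
   Context: Notation: $B_r(x)=\{y:|y-x|\le r\}$; $\mathrm{dist}(y,A)=\inf_{z\in A}|y-z|$; $\sigma:\mathbb R^J\to\mathbb R^{J\times N}$ continuous, $a=\sigma\sigma^T$. $\mathcal C^2_c(\overline G)$: restrictions to $\overline G$ of functions $\mathcal C^2$ on every open neighbourhood of $\overline G$ with compact support. Piecewise $\mathcal C^1$ with continuous reflection: $G=\bigcap_{i\in\mathcal I}G_i$ nonempty domain, $\mathcal I$ finite, $G_i=\{\phi^i>0\}$, $\partial G_i=\{\phi^i=0\}$ with $\phi^i\in\mathcal C^1(\mathbb R^J)$; $n^i(x)$ the unit inward normal to $\partial G_i$; $\mathcal I(x)=\{i:x\in\partial G_i\}$; $n(x)=\{\sum_{i\in\mathcal I(x)}s_in^i(x):s_i\ge0\}$; $\gamma^i$ continuous vector fields on $\partial G_i$ with $\langle n^i,\gamma^i\rangle>0$; $d(x)=\{\sum_{i\in\mathcal I(x)}s_i\gamma^i(x):s_i\ge0\}$ for $x\in\partial G$. $\mathcal U=\{x\in\partial G:\exists n\in n(x),\ \langle n,d\rangle>0\ \forall d\in d(x)\setminus\{0\}\}$. Assumption 2': $\mathcal V$ is finite with $\mathcal V\supset\partial G\setminus\mathcal U$, and for each $x\in\mathcal V$ there exist a unit vector $v_x$ and constants $r_x>0$, $\alpha_x>0$, $0<c^1_x<1<c^2_x<\infty$ such that, with $\Theta_x=\{z:\langle z,v_x\rangle\ge0\}$, for all $y\in\overline G\cap B_{r_x}(x)$: (1) $\langle v_x,y-x\rangle\ge\alpha_x|y-x|$;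 (2) $\gamma^i(y)\in\Theta_x$ for each $i\in\mathcal I(y)\subset\mathcal I(x)$; (3) for every $r\in(0,r_x/c^2_x)$, $\overline G\cap B_{c^1_xr}(x)\subseteq\{y\in\overline G\cap B_{r_x}(x):\mathrm{dist}(y,x+rv_x+\Theta_x)>0\}\subseteq\overline G\cap B_{c^2_xr}(x)$; (4) $v_x^Ta(y)v_x\ge\alpha_x$ for all $y\in B_{r_x}(x)$. *)

theory Defs
  imports "HOL-Analysis.Analysis"
begin

text \<open>Euclidean space R^J is modelled as real^'n (J = CARD('n)).\<close>

definition grad :: "(real^'n \<Rightarrow> real) \<Rightarrow> real^'n \<Rightarrow> real^'n" where
  "grad f y = (\<chi> k. frechet_derivative f (at y) (axis k 1))"

definition hess :: "(real^'n \<Rightarrow> real) \<Rightarrow> real^'n \<Rightarrow> real^'n^'n" where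
  "hess f y = (\<chi> i j. frechet_derivative (\<lambda>z. grad f z $ j) (at y) (axis i 1))"

definition C1_on :: "(real^'n) set \<Rightarrow> (real^'n \<Rightarrow> real) \<Rightarrow> bool" where
  "C1_on U f \<longleftrightarrow> f differentiable_on U \<and> continuous_on U (grad f)"

definition C2_on :: "(real^'n) set \<Rightarrow> (real^'n \<Rightarrow> real) \<Rightarrow> bool" where
  "C2_on U f \<longleftrightarrow> C1_on U f \<and> (\<forall>j. C1_on U (\<lambda>z. grad f z $ j))"

text \<open>C^2_c(closure G): (an extension of) the function is C^2 with compact support
on some open neighbourhood U of closure G.\<close>
definition C2c_closure :: "(real^'n) set \<Rightarrow> (real^'n \<Rightarrow> real) \<Rightarrow> bool" where
  "C2c_closure G g \<longleftrightarrow> (\<exists>U K. open U \<and> closure G \<subseteq> U \<and> compact K \<and> K \<subseteq> U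
        \<and> (\<forall>y\<in>U - K. g y = 0) \<and> C2_on U g)"

text \<open>Piecewise C^1 domain with continuous reflection:
  G = \<Inter>_{i\<in>I} {phi i > 0}, data phi (defining functions) and gamma (reflection fields).\<close>
definition Gdom :: "'i set \<Rightarrow> ('i \<Rightarrow> real^'n \<Rightarrow> real) \<Rightarrow> (real^'n) set" where
  "Gdom I \<phi> = (\<Inter>i\<in>I. {y. \<phi> i y > 0})"

definition nrm :: "('i \<Rightarrow> real^'n \<Rightarrow> real) \<Rightarrow> 'i \<Rightarrow> real^'n \<Rightarrow> real^'n" where
  "nrm \<phi> i x = grad (\<phi> i) x /\<^sub>R norm (grad (\<phi> i) x)"

definition Iset :: "'i set \<Rightarrow> ('i \<Rightarrow> real^'n \<Rightarrow> real) \<Rightarrow> real^'n \<Rightarrow> 'i set" where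
  "Iset I \<phi> x = {i\<in>I. \<phi> i x = 0}"

definition ncone :: "'i set \<Rightarrow> ('i \<Rightarrow> real^'n \<Rightarrow> real) \<Rightarrow> real^'n \<Rightarrow> (real^'n) set" where
  "ncone I \<phi> x = {(\<Sum>i\<in>Iset I \<phi> x. s i *\<^sub>R nrm \<phi> i x) | s. \<forall>i. s i \<ge> 0}"

definition dcone :: "'i set \<Rightarrow> ('i \<Rightarrow> real^'n \<Rightarrow> real) \<Rightarrow> ('i \<Rightarrow> real^'n \<Rightarrow> real^'n)
      \<Rightarrow> real^'n \<Rightarrow> (real^'n) set" where
  "dcone I \<phi> \<gamma> x = {(\<Sum>i\<in>Iset I \<phi> x. s i *\<^sub>R \<gamma> i x) | s. \<forall>i. s i \<ge> 0}"

definition piecewise_C1_cont_refl ::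
  "'i set \<Rightarrow> ('i \<Rightarrow> real^'n \<Rightarrow> real) \<Rightarrow> ('i \<Rightarrow> real^'n \<Rightarrow> real^'n) \<Rightarrow> bool" where
  "piecewise_C1_cont_refl I \<phi> \<gamma> \<longleftrightarrow>
     finite I \<and> Gdom I \<phi> \<noteq> {} \<and> open (Gdom I \<phi>) \<and> connected (Gdom I \<phi>)
     \<and> (\<forall>i\<in>I. C1_on UNIV (\<phi> i)
          \<and> frontier {y. \<phi> i y > 0} = {y. \<phi> i y = 0}
          \<and> (\<forall>y. \<phi> i y = 0 \<longrightarrow> grad (\<phi> i) y \<noteq> 0)
          \<and> continuous_on {y. \<phi> i y = 0} (\<gamma> i)
          \<and> (\<forall>y. \<phi> i y = 0 \<longrightarrow> nrm \<phi> i y \<bullet> \<gamma> i y > 0))"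

definition Uset :: "'i set \<Rightarrow> ('i \<Rightarrow> real^'n \<Rightarrow> real) \<Rightarrow> ('i \<Rightarrow> real^'n \<Rightarrow> real^'n)
      \<Rightarrow> (real^'n) set" where
  "Uset I \<phi> \<gamma> = {x \<in> frontier (Gdom I \<phi>). \<exists>n\<in>ncone I \<phi> x.
                     \<forall>d\<in>dcone I \<phi> \<gamma> x - {0}. n \<bullet> d > 0}"

definition assumption2' ::
  "'i set \<Rightarrow> ('i \<Rightarrow> real^'n \<Rightarrow> real) \<Rightarrow> ('i \<Rightarrow> real^'n \<Rightarrow> real^'n)
     \<Rightarrow> (real^'n \<Rightarrow> real^'m^'n) \<Rightarrow> (real^'n) set \<Rightarrow> bool" where
  "assumption2' I \<phi> \<gamma> \<sigma> V \<longleftrightarrow>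
     finite V \<and> frontier (Gdom I \<phi>) - Uset I \<phi> \<gamma> \<subseteq> V \<and>
     (\<forall>x\<in>V. \<exists>v r \<alpha> c1 c2. norm v = 1 \<and> r > 0 \<and> \<alpha> > 0 \<and> 0 < c1 \<and> c1 < 1 \<and> 1 < c2 \<and>
        (let \<Theta> = {z. z \<bullet> v \<ge> 0}; Gb = closure (Gdom I \<phi>) in
          (\<forall>y\<in>Gb \<inter> cball x r. v \<bullet> (y - x) \<ge> \<alpha> * norm (y - x)) \<and>
          (\<forall>y\<in>Gb \<inter> cball x r. Iset I \<phi> y \<subseteq> Iset I \<phi> x \<and>
                (\<forall>i\<in>Iset I \<phi> y. \<gamma> i y \<in> \<Theta>)) \<and>
          (\<forall>\<rho>. 0 < \<rho> \<and> \<rho> < r / c2 \<longrightarrow>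
              Gb \<inter> cball x (c1 * \<rho>)
                \<subseteq> {y \<in> Gb \<inter> cball x r. infdist y ((\<lambda>z. x + \<rho> *\<^sub>R v + z) ` \<Theta>) > 0}
            \<and> {y \<in> Gb \<inter> cball x r. infdist y ((\<lambda>z. x + \<rho> *\<^sub>R v + z) ` \<Theta>) > 0}
                \<subseteq> Gb \<inter> cball x (c2 * \<rho>)) \<and>
          (\<forall>y\<in>cball x r. v \<bullet> ((\<sigma> y ** transpose (\<sigma> y)) *v v) \<ge> \<alpha>)))"

end

theory Submission
  imports Defs
begin


definition clamp :: "real \<Rightarrow> real" where "clamp t = max 0 (min 1 t)"

lemma clamp_cont: "continuous_on UNIV clamp"
  unfolding clamp_def by (intro continuous_intros)

lemma clamp_deriv:
  fixes p p' :: "real \<Rightarrow> real"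
  assumes d: "\<And>t. (p has_real_derivative p' t) (at t)" and z: "p' 0 = 0" "p' 1 = 0"
  shows "((\<lambda>t. p (clamp t)) has_real_derivative p' (clamp t)) (at t)"
proof -
  consider "t < 0" | "t = 0" | "0 < t \<and> t < 1" | "t = 1" | "t > 1" by linarith
  then show ?thesis
  proof cases
    case 1
    have e: "p' (clamp t) = 0" using 1 z by (simp add: clamp_def)
    have "((\<lambda>t. p 0) has_real_derivative 0) (at t)" by simp
    then have "((\<lambda>t. p (clamp t)) has_real_derivative 0) (at t)"
      apply (rule has_field_derivative_transform_within_open[where S="{..<0}"])
      using 1 z by (auto simp: clamp_def)
    then show ?thesis by (simp add: e)
  next
    case 5
    have e: "p' (clamp t) = 0" using 5 z by (simp add: clamp_def)
    have "((\<lambda>t. p 1) has_real_derivative 0) (at t)" by simp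
    then have "((\<lambda>t. p (clamp t)) has_real_derivative 0) (at t)"
      apply (rule has_field_derivative_transform_within_open[where S="{1<..}"])
      using 5 z by (auto simp: clamp_def)
    then show ?thesis by (simp add: e)
  next
    case 3
    have e: "clamp t = t" using 3 by (simp add: clamp_def)
    have "((\<lambda>t. p (clamp t)) has_real_derivative p' t) (at t)"
      apply (rule has_field_derivative_transform_within_open[where S="{0<..<1}", OF d])
      using 3 by (auto simp: clamp_def)
    then show ?thesis by (simp add: e)
  next
    case 2
    have a: "((\<lambda>t. p (clamp t)) has_real_derivative p' (clamp t)) (at t within {..t})"
    proof -
      have e: "p' (clamp t) = 0" using 2 z by (simp add: clamp_def)
      have "((\<lambda>t. p 0) has_real_derivative 0) (at t within {..t})" by simp
      then have "((\<lambda>t. p (clamp t)) has_real_derivative 0) (at t within {..t})"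
        apply (rule has_field_derivative_transform_within[where d=1])
        using 2 z by (auto simp: clamp_def)
      then show ?thesis by (simp add: e)
    qed
    have b: "((\<lambda>t. p (clamp t)) has_real_derivative p' (clamp t)) (at t within {t..})"
    proof -
      have e: "clamp t = t" using 2 by (simp add: clamp_def)
      have "(p has_real_derivative p' t) (at t within {t..})"
        using d has_field_derivative_at_within by blast
      then have "((\<lambda>t. p (clamp t)) has_real_derivative p' t) (at t within {t..})"
        apply (rule has_field_derivative_transform_within[where d=1])
        using 2 z by (auto simp: clamp_def dist_real_def)
      then show ?thesis by (simp add: e)
    qed
    have "{..t} \<union> {t..} = (UNIV::real set)" by auto
    then show ?thesis using a b unfolding has_field_derivative_iff
      by (metis Lim_within_Un)
  next
    case 4
    have a: "((\<lambda>t. p (clamp t)) has_real_derivative p' (clamp t)) (at t within {t..})"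
    proof -
      have e: "p' (clamp t) = 0" using 4 z by (simp add: clamp_def)
      have "((\<lambda>t. p 1) has_real_derivative 0) (at t within {t..})" by simp
      then have "((\<lambda>t. p (clamp t)) has_real_derivative 0) (at t within {t..})"
        apply (rule has_field_derivative_transform_within[where d=1])
        using 4 z by (auto simp: clamp_def)
      then show ?thesis by (simp add: e)
    qed
    have b: "((\<lambda>t. p (clamp t)) has_real_derivative p' (clamp t)) (at t within {..t})"
    proof -
      have e: "clamp t = t" using 4 by (simp add: clamp_def)
      have "(p has_real_derivative p' t) (at t within {..t})"
        using d has_field_derivative_at_within by blast
      then have "((\<lambda>t. p (clamp t)) has_real_derivative p' t) (at t within {..t})"
        apply (rule has_field_derivative_transform_within[where d=1])
        using 4 z by (auto simp: clamp_def dist_real_def)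
      then show ?thesis by (simp add: e)
    qed
    have "{..t} \<union> {t..} = (UNIV::real set)" by auto
    then show ?thesis using a b unfolding has_field_derivative_iff
      by (metis Lim_within_Un)
  qed
qed

definition P0 :: "real \<Rightarrow> real" where "P0 t = 10*t^3 - 15*t^4 + 6*t^5"
definition P1 :: "real \<Rightarrow> real" where "P1 t = 30*t^2 - 60*t^3 + 30*t^4"
definition P2 :: "real \<Rightarrow> real" where "P2 t = 60*t - 180*t^2 + 120*t^3"

lemma P0_d: "(P0 has_real_derivative P1 t) (at t)"
  unfolding P0_def P1_def by (auto intro!: derivative_eq_intros simp: algebra_simps power2_eq_square power3_eq_cube)
lemma P1_d: "(P1 has_real_derivative P2 t) (at t)"
  unfolding P2_def P1_def by (auto intro!: derivative_eq_intros simp: algebra_simps power2_eq_square power3_eq_cube)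

definition hh :: "real \<Rightarrow> real" where "hh s = 1 - P0 (clamp (2 * s - 1))"
definition h1 :: "real \<Rightarrow> real" where "h1 s = - 2 * P1 (clamp (2 * s - 1))"
definition h2 :: "real \<Rightarrow> real" where "h2 s = - 4 * P2 (clamp (2 * s - 1))"

lemma hh_d: "(hh has_real_derivative h1 s) (at s)"
proof -
  have A: "((\<lambda>t. P0 (clamp t)) has_real_derivative P1 (clamp t)) (at t)" for t
    by (rule clamp_deriv[OF P0_d]) (auto simp: P1_def)
  have B: "((\<lambda>s. 2 * s - 1) has_real_derivative 2) (at s)"
    by (auto intro!: derivative_eq_intros)
  have "((\<lambda>s. P0 (clamp (2 * s - 1))) has_real_derivative P1 (clamp (2 * s - 1)) * 2) (at s)"
    by (rule DERIV_chain2[OF A B])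
  then show ?thesis unfolding hh_def h1_def
    by (auto intro!: derivative_eq_intros)
qed

lemma h1_d: "(h1 has_real_derivative h2 s) (at s)"
proof -
  have A: "((\<lambda>t. P1 (clamp t)) has_real_derivative P2 (clamp t)) (at t)" for t
    by (rule clamp_deriv[OF P1_d]) (auto simp: P2_def)
  have B: "((\<lambda>s. 2 * s - 1) has_real_derivative 2) (at s)"
    by (auto intro!: derivative_eq_intros)
  have "((\<lambda>s. P1 (clamp (2 * s - 1))) has_real_derivative P2 (clamp (2 * s - 1)) * 2) (at s)"
    by (rule DERIV_chain2[OF A B])
  then show ?thesis unfolding h1_def h2_def
    by (auto intro!: derivative_eq_intros)
qed

lemma h2_cont: "continuous_on UNIV h2"
  unfolding h2_def P2_def clamp_def by (intro continuous_intros)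
lemma h1_cont: "continuous_on UNIV h1"
  unfolding h1_def P1_def clamp_def by (intro continuous_intros)

lemma clamp_range: "0 \<le> clamp t" "clamp t \<le> 1" by (auto simp: clamp_def)

lemma hh_lo: "s \<le> 1/2 \<Longrightarrow> hh s = 1" by (simp add: hh_def clamp_def P0_def)
lemma hh_hi: "s \<ge> 1 \<Longrightarrow> hh s = 0" by (simp add: hh_def clamp_def P0_def)
lemma h1_out: "s \<le> 1/2 \<or> s \<ge> 1 \<Longrightarrow> h1 s = 0" by (auto simp: h1_def clamp_def P1_def)
lemma h2_out: "s \<le> 1/2 \<or> s \<ge> 1 \<Longrightarrow> h2 s = 0" by (auto simp: h2_def clamp_def P2_def)

lemma hh_nonneg: "0 \<le> hh s"
proof -
  define t where "t = clamp (2 * s-1)"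
  have t: "0 \<le> t" "t \<le> 1" using clamp_range t_def by auto
  have "1 - P0 t = (1-t)^3 * (1 + 3*t + 6*t^2)" unfolding P0_def by algebra
  moreover have "(1-t)^3 * (1 + 3*t + 6*t^2) \<ge> 0" using t by (intro mult_nonneg_nonneg) auto
  ultimately show ?thesis unfolding hh_def t_def[symmetric] by simp
qed

lemma hh_le1: "hh s \<le> 1"
proof -
  define t where "t = clamp (2 * s-1)"
  have t: "0 \<le> t" "t \<le> 1" using clamp_range t_def by auto
  have e1: "P0 t = t^3 * (10 - 15*t + 6*t^2)" unfolding P0_def by algebra
  have "10 - 15*t + 6*t^2 = 6*(t-5/4)^2 + 5/8" by algebra
  moreover have "(t-5/4)^2 \<ge> 0" by simp
  ultimately have "10 - 15*t + 6*t^2 \<ge> 0" by linarith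
  with e1 have "P0 t \<ge> 0" using t by (metis mult_nonneg_nonneg zero_le_power)
  then show ?thesis unfolding hh_def t_def[symmetric] by simp
qed

lemma h1_nonpos: "h1 s \<le> 0"
proof -
  define t where "t = clamp (2 * s-1)"
  have "P1 t = 30 * (t*(1-t))^2" unfolding P1_def by algebra
  then have "P1 t \<ge> 0" by simp
  then show ?thesis unfolding h1_def t_def[symmetric] by simp
qed

lemma h1_bd: "\<bar>h1 s\<bar> \<le> 240"
proof -
  define t where "t = clamp (2 * s-1)"
  have t: "0 \<le> t" "t \<le> 1" using clamp_range t_def by auto
  have "\<bar>P1 t\<bar> \<le> 120" unfolding P1_def using t
    by (smt (verit) mult_left_le_one_le mult_nonneg_nonneg power_le_one zero_le_power)
  then show ?thesis unfolding h1_def t_def[symmetric] by simp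
qed

lemma h2_bd: "\<bar>h2 s\<bar> \<le> 1440"
proof -
  define t where "t = clamp (2 * s-1)"
  have t: "0 \<le> t" "t \<le> 1" using clamp_range t_def by auto
  have "\<bar>P2 t\<bar> \<le> 360" unfolding P2_def using t
    by (smt (verit) mult_left_le_one_le mult_nonneg_nonneg power_le_one zero_le_power)
  then show ?thesis unfolding h2_def t_def[symmetric] by simp
qed



definition qf :: "real^'n \<Rightarrow> real^'n \<Rightarrow> real \<Rightarrow> real \<Rightarrow> real^'n \<Rightarrow> real" where
  "qf x n a b y = a * (n \<bullet> (y - x)) + b * ((y - x) \<bullet> (y - x))"
definition uv :: "real^'n \<Rightarrow> real^'n \<Rightarrow> real \<Rightarrow> real \<Rightarrow> real^'n \<Rightarrow> real^'n" where
  "uv x n a b y = a *\<^sub>R n + (2 * b) *\<^sub>R (y - x)"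

lemma qf_d: "(qf x n a b has_derivative (\<lambda>v. uv x n a b y \<bullet> v)) (at y)"
  unfolding qf_def uv_def
  by (auto intro!: derivative_eq_intros simp: algebra_simps inner_commute)

lemma comp_real_d:
  fixes f :: "real \<Rightarrow> real" and q :: "real^'n \<Rightarrow> real"
  assumes "(f has_real_derivative f' (q y)) (at (q y))" "(q has_derivative q') (at y)"
  shows "((\<lambda>y. f (q y)) has_derivative (\<lambda>v. f' (q y) * q' v)) (at y)"
proof -
  have "(f has_derivative (\<lambda>t. f' (q y) * t)) (at (q y))"
    using assms(1) by (simp add: has_field_derivative_def)
  from has_derivative_compose[OF assms(2) this] show ?thesis .
qed

lemma g_d: "((\<lambda>y. hh (qf x n a b y)) has_derivative
    (\<lambda>v. h1 (qf x n a b y) * (uv x n a b y \<bullet> v))) (at y)"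
  by (rule comp_real_d[where q="qf x n a b" and f=hh and f'=h1, OF hh_d qf_d])

lemma grad_g: "grad (\<lambda>y. hh (qf x n a b y)) y = h1 (qf x n a b y) *\<^sub>R uv x n a b y"
  unfolding grad_def frechet_derivative_at[OF g_d, symmetric]
  by (simp add: vec_eq_iff inner_axis)

lemma gradj_eq: "(\<lambda>z. grad (\<lambda>y. hh (qf x n a b y)) z $ j) =
   (\<lambda>z. h1 (qf x n a b z) * (uv x n a b z \<bullet> axis j 1))"
  by (simp add: grad_g inner_axis)

lemma gradj_d: "((\<lambda>z. h1 (qf x n a b z) * (uv x n a b z \<bullet> axis j 1)) has_derivative
   (\<lambda>v. h2 (qf x n a b y) * (uv x n a b y \<bullet> v) * (uv x n a b y \<bullet> axis j 1)
        + h1 (qf x n a b y) * ((2 * b) *\<^sub>R v \<bullet> axis j 1))) (at y)"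
proof -
  have A: "((\<lambda>z. h1 (qf x n a b z)) has_derivative (\<lambda>v. h2 (qf x n a b y) * (uv x n a b y \<bullet> v))) (at y)"
    by (rule comp_real_d[where q="qf x n a b" and f=h1 and f'=h2, OF h1_d qf_d])
  have B: "((\<lambda>z. uv x n a b z \<bullet> axis j 1) has_derivative (\<lambda>v. (2 * b) *\<^sub>R v \<bullet> axis j 1)) (at y)"
    unfolding uv_def by (auto intro!: derivative_eq_intros simp: algebra_simps)
  show ?thesis using has_derivative_mult[OF A B] by (simp add: algebra_simps)
qed

lemma hessg_vec0: "grad (\<lambda>z. h1 (qf x n a b z) * (uv x n a b z \<bullet> axis j 1)) y =
   (h2 (qf x n a b y) * (uv x n a b y $ j)) *\<^sub>R uv x n a b y
    + (h1 (qf x n a b y) * (2 * b)) *\<^sub>R axis j 1"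
  unfolding grad_def frechet_derivative_at[OF gradj_d, symmetric]
  apply (simp add: vec_eq_iff inner_axis)
  apply (auto simp: axis_def)
  done

lemma hessg_vec: "grad (\<lambda>z. grad (\<lambda>y. hh (qf x n a b y)) z $ j) y =
   (h2 (qf x n a b y) * (uv x n a b y $ j)) *\<^sub>R uv x n a b y
    + (h1 (qf x n a b y) * (2 * b)) *\<^sub>R axis j 1"
  unfolding gradj_eq by (rule hessg_vec0)

lemma hess_g: "hess (\<lambda>y. hh (qf x n a b y)) y $ i $ j =
   h2 (qf x n a b y) * (uv x n a b y $ i) * (uv x n a b y $ j)
    + h1 (qf x n a b y) * (2 * b) * (if i = j then 1 else 0)"
proof -
  have "hess (\<lambda>y. hh (qf x n a b y)) y $ i $ j = grad (\<lambda>z. grad (\<lambda>y. hh (qf x n a b y)) z $ j) y $ i"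
    by (simp add: hess_def grad_def)
  then show ?thesis unfolding hessg_vec by (auto simp: axis_def)
qed

lemma qf_cont: "continuous_on UNIV (qf x n a b)"
  unfolding qf_def by (intro continuous_intros)

lemma uv_cont: "continuous_on UNIV (uv x n a b)"
  unfolding uv_def by (intro continuous_intros)

lemma C2_g: "C2_on UNIV (\<lambda>y. hh (qf x n a b y))"
proof -
  have h1q: "continuous_on UNIV (\<lambda>y. h1 (qf x n a b y))"
    by (rule continuous_on_compose2[OF h1_cont qf_cont]) auto
  have h2q: "continuous_on UNIV (\<lambda>y. h2 (qf x n a b y))"
    by (rule continuous_on_compose2[OF h2_cont qf_cont]) auto
  have c1: "C1_on UNIV (\<lambda>y. hh (qf x n a b y))"
    unfolding C1_on_def
  proof
    show "(\<lambda>y. hh (qf x n a b y)) differentiable_on UNIV"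
      unfolding differentiable_on_def differentiable_def using g_d
      by blast
    show "continuous_on UNIV (grad (\<lambda>y. hh (qf x n a b y)))"
      unfolding grad_g[abs_def] by (intro continuous_intros h1q uv_cont)
  qed
  have "C1_on UNIV (\<lambda>z. grad (\<lambda>y. hh (qf x n a b y)) z $ j)" for j
    unfolding C1_on_def
  proof
    show "(\<lambda>z. grad (\<lambda>y. hh (qf x n a b y)) z $ j) differentiable_on UNIV"
      unfolding differentiable_on_def differentiable_def gradj_eq using gradj_d
      by blast
    have "continuous_on UNIV (\<lambda>y. (h2 (qf x n a b y) * (uv x n a b y $ j)) *\<^sub>R uv x n a b y
    + (h1 (qf x n a b y) * (2 * b)) *\<^sub>R axis j 1)"
      by (intro continuous_intros h1q h2q uv_cont)
    then show "continuous_on UNIV (grad (\<lambda>z. grad (\<lambda>y. hh (qf x n a b y)) z $ j))"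
      unfolding hessg_vec[abs_def] .
  qed
  with c1 show ?thesis unfolding C2_on_def by blast
qed



lemma lin_grad:
  fixes f :: "real^'n \<Rightarrow> real"
  assumes "f differentiable (at x)"
  shows "frechet_derivative f (at x) v = grad f x \<bullet> v"
proof -
  let ?F = "frechet_derivative f (at x)"
  have lin: "linear ?F" using assms frechet_derivative_works has_derivative_linear by blast
  have "?F v = ?F (\<Sum>i\<in>UNIV. v$i *\<^sub>R axis i 1)"
    using basis_expansion[of v] by (simp add: scalar_mult_eq_scaleR)
  also have "\<dots> = (\<Sum>i\<in>UNIV. v$i * ?F (axis i 1))"
    using lin by (simp add: linear_sum linear_scale)
  also have "\<dots> = grad f x \<bullet> v" by (simp add: grad_def inner_vec_def mult.commute)
  finally show ?thesis .
qed

lemma finite_pos_choice: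
  assumes "finite F" "\<forall>i\<in>F. \<exists>c>0. P i (c::real)"
    "\<And>i c c'. 0 < c' \<Longrightarrow> c' \<le> c \<Longrightarrow> P i c \<Longrightarrow> P i c'"
  shows "\<exists>c>0. \<forall>i\<in>F. P i c"
  using assms(1,2)
proof (induction F rule: finite_induct)
  case empty then show ?case by (auto intro: exI[of _ 1])
next
  case (insert j F)
  then obtain c1 where c1: "c1 > 0" "\<forall>i\<in>F. P i c1" by auto
  from insert obtain c2 where c2: "c2 > 0" "P j c2" by auto
  have "P j (min c1 c2)" by (rule assms(3)[OF _ _ c2(2)]) (use c1 c2 in auto)
  moreover have "\<forall>i\<in>F. P i (min c1 c2)"
    using c1 c2 by (auto intro: assms(3)[OF _ min.cobounded1])
  ultimately show ?case using c1 c2 by (intro exI[of _ "min c1 c2"]) auto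
qed

lemma loc_eventually:
  "eventually P (nhds (x::real^'n)) \<longleftrightarrow> (\<exists>d>0. \<forall>y. dist y x < d \<longrightarrow> P y)"
  by (rule eventually_nhds_metric)

lemma qf_scaled:
  assumes "r > 0"
  shows "qf x n (a0/r) (2/r^2) y = a0 * (n \<bullet> ((1/r) *\<^sub>R (y - x))) + 2 * (norm ((1/r) *\<^sub>R (y-x)))^2"
proof -
  have nn: "norm (y - x) * norm (y - x) = (y - x) \<bullet> (y - x)"
    by (metis power2_eq_square power2_norm_eq_inner)
  have "(norm ((1/r) *\<^sub>R (y-x)))^2 = ((y - x) \<bullet> (y - x)) / r^2"
    using nn by (simp add: power2_eq_square)
  moreover have "n \<bullet> ((1/r) *\<^sub>R (y - x)) = (n \<bullet> (y - x)) / r"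
    unfolding inner_scaleR_right by simp
  ultimately show ?thesis unfolding qf_def by simp
qed

lemma qf_lower:
  assumes "r > 0" "a0 \<ge> 0"
  shows "qf x n (a0/r) (2/r^2) y \<ge> 2*(norm (y-x)/r)^2 - a0*norm n*(norm (y-x)/r)"
proof -
  have w: "norm ((1/r) *\<^sub>R (y-x)) = norm (y-x)/r" using assms by simp
  have cs: "\<And>v. - (norm n * norm v) \<le> n \<bullet> v \<and> n \<bullet> v \<le> norm n * norm v"
    by (meson Cauchy_Schwarz_ineq2 abs_le_iff minus_le_iff)
  have "n \<bullet> ((1/r) *\<^sub>R (y - x)) \<ge> - (norm n * (norm (y-x)/r))"
    using cs[of "(1/r) *\<^sub>R (y - x)", unfolded w] by linarith
  then have "a0 * (n \<bullet> ((1/r) *\<^sub>R (y - x))) \<ge> a0 * (- (norm n * (norm (y-x)/r)))"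
    using assms(2) mult_left_mono by blast
  then show ?thesis unfolding qf_scaled[OF assms(1)] w by simp
qed

lemma qf_upper:
  assumes "r > 0" "a0 \<ge> 0"
  shows "qf x n (a0/r) (2/r^2) y \<le> 2*(norm (y-x)/r)^2 + a0*norm n*(norm (y-x)/r)"
proof -
  have w: "norm ((1/r) *\<^sub>R (y-x)) = norm (y-x)/r" using assms by simp
  have cs: "\<And>v. - (norm n * norm v) \<le> n \<bullet> v \<and> n \<bullet> v \<le> norm n * norm v"
    by (meson Cauchy_Schwarz_ineq2 abs_le_iff minus_le_iff)
  have "n \<bullet> ((1/r) *\<^sub>R (y - x)) \<le> norm n * (norm (y-x)/r)"
    using cs[of "(1/r) *\<^sub>R (y - x)", unfolded w] by linarith
  then have "a0 * (n \<bullet> ((1/r) *\<^sub>R (y - x))) \<le> a0 * (norm n * (norm (y-x)/r))"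
    using assms(2) mult_left_mono by blast
  then show ?thesis unfolding qf_scaled[OF assms(1)] w by simp
qed

lemma ar1: "(t::real) > 1 \<Longrightarrow> 2*t^2 - t > 1"
proof -
  assume "t > 1"
  then have "(2*t+1)*(t-1) > 0" by simp
  then show ?thesis by (simp add: algebra_simps power2_eq_square)
qed

lemma ar2: "(k::real) \<ge> 0 \<Longrightarrow> t \<ge> k + 2 \<Longrightarrow> 2*t^2 - k*t > 1"
proof -
  assume a: "k \<ge> 0" "t \<ge> k + 2"
  then have "t * (2*t - k) \<ge> 2 * 2" by (intro mult_mono) auto
  then show ?thesis by (simp add: algebra_simps power2_eq_square)
qed

lemma qf_t:
  assumes "r > 0"
  shows "qf x n (a0/r) (2/r^2) y = a0/r * (n \<bullet> (y - x)) + 2 * (norm (y - x)/r)^2"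
  unfolding qf_def power_divide power2_norm_eq_inner by simp

lemma ar3:
  assumes "(k::real) \<ge> 0" "t \<ge> 0" "t * (4 * (k + 1)) \<le> 1"
  shows "2 * t^2 + k * t \<le> 1/2"
proof -
  have kt0: "k * t \<ge> 0" using assms by simp
  have "t * (4 * (k + 1)) = 4 * t + 4 * (k * t)" by algebra
  then have t4: "4 * t \<le> 1" and kt: "4 * (k * t) \<le> 1" using assms kt0 by linarith+
  have "t * (4 * t) \<le> t * 1" using t4 assms(2) by (rule mult_left_mono)
  then have "t^2 \<le> t * (1/4)" by (simp add: power2_eq_square)
  then show ?thesis using t4 kt by linarith
qed

lemma entry_bd:
  fixes a1 a2 u v b e m :: real
  assumes "\<bar>a2\<bar> \<le> 1440" "\<bar>a1\<bar> \<le> 240" "\<bar>u\<bar> \<le> m" "\<bar>v\<bar> \<le> m" "\<bar>e\<bar> \<le> 1" "b \<ge> 0"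
  shows "\<bar>a2 * u * v + a1 * b * e\<bar> \<le> 1440 * m^2 + 240 * b"
proof -
  have m: "m \<ge> 0" using assms(3) by linarith
  have "\<bar>a2 * u * v\<bar> = \<bar>a2\<bar> * \<bar>u\<bar> * \<bar>v\<bar>" by (simp add: abs_mult)
  also have "\<dots> \<le> 1440 * m * m" using assms m by (intro mult_mono) auto
  finally have 1: "\<bar>a2 * u * v\<bar> \<le> 1440 * m^2" by (simp add: power2_eq_square mult.assoc)
  have "\<bar>a1 * b * e\<bar> = \<bar>a1\<bar> * b * \<bar>e\<bar>" using assms(6) by (simp add: abs_mult)
  also have "\<dots> \<le> 240 * b * 1" using assms by (intro mult_mono) auto
  finally have 2: "\<bar>a1 * b * e\<bar> \<le> 240 * b" by simp
  show ?thesis using 1 2 abs_triangle_ineq[of "a2 * u * v" "a1 * b * e"] by linarith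
qed

lemma uv_bd:
  assumes "r > 0" "a0 \<ge> 0" "norm (y - x) \<le> r"
  shows "norm (uv x n (a0/r) (2/r^2) y) \<le> (a0 * norm n + 4) / r"
proof -
  have "norm (uv x n (a0/r) (2/r^2) y) \<le> norm ((a0/r) *\<^sub>R n) + norm ((2 * (2/r^2)) *\<^sub>R (y - x))"
    unfolding uv_def by (rule norm_triangle_ineq)
  also have "norm ((a0/r) *\<^sub>R n) = a0 / r * norm n" using assms by simp
  also have "norm ((2 * (2/r^2)) *\<^sub>R (y - x)) = 4 / r^2 * norm (y - x)" by simp
  also have "4 / r^2 * norm (y - x) \<le> 4 / r^2 * r" using assms by (intro mult_left_mono) auto
  also have "4 / r^2 * r = 4 / r" by (simp add: power2_eq_square)
  finally show ?thesis by (simp add: add_divide_distrib)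
qed

theorem propositionA6:
  fixes I :: "'i set" and \<phi> :: "'i \<Rightarrow> real^'n \<Rightarrow> real"
    and \<gamma> :: "'i \<Rightarrow> real^'n \<Rightarrow> real^'n" and \<sigma> :: "real^'n \<Rightarrow> real^'m^'n"
    and V :: "(real^'n) set"
  assumes "piecewise_C1_cont_refl I \<phi> \<gamma>"
    and "continuous_on UNIV \<sigma>"
    and "V \<subseteq> frontier (Gdom I \<phi>)"
    and "assumption2' I \<phi> \<gamma> \<sigma> V"
  shows "\<forall>x \<in> frontier (Gdom I \<phi>) - V.
     \<exists>rx A (g :: real \<Rightarrow> real^'n \<Rightarrow> real).
       0 < rx \<and>
       (let S = V \<union> (\<Union>i\<in>I - Iset I \<phi> x. frontier (Gdom I \<phi>) \<inter> {y. \<phi> i y = 0})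
        in S \<noteq> {} \<longrightarrow> rx < infdist x S) \<and>
       0 < A \<and>
       (\<forall>r. 0 < r \<and> r \<le> rx \<longrightarrow>
          C2c_closure (Gdom I \<phi>) (g r) \<and>
          (\<forall>y\<in>closure (Gdom I \<phi>). g r y \<ge> 0) \<and>
          closure {y. g r y \<noteq> 0} \<inter> closure (Gdom I \<phi>) \<subseteq> cball x r \<inter> closure (Gdom I \<phi>) \<and>
          (\<exists>\<delta>>0. \<forall>y\<in>cball x \<delta> \<inter> closure (Gdom I \<phi>). g r y = 1) \<and>
          (r < rx \<longrightarrow>
             (\<forall>y\<in>closure (Gdom I \<phi>). \<bar>g r y\<bar> \<le> A) \<and>
             (\<forall>y\<in>closure (Gdom I \<phi>). norm (grad (g r) y) \<le> A / r) \<and>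
             (\<exists>B < A / r\<^sup>2. \<forall>y\<in>closure (Gdom I \<phi>).
                 (\<Sum>i\<in>UNIV. \<Sum>j\<in>UNIV. \<bar>hess (g r) y $ i $ j\<bar>) \<le> B)) \<and>
          (\<forall>y\<in>frontier (Gdom I \<phi>). \<forall>d\<in>dcone I \<phi> \<gamma> y. d \<bullet> grad (g r) y \<le> 0))"
proof (intro ballI)
  fix x assume xF: "x \<in> frontier (Gdom I \<phi>) - V"
  define G where "G = Gdom I \<phi>"
  have fin: "finite I" and openG: "open G"
    and C1: "\<And>i. i \<in> I \<Longrightarrow> C1_on UNIV (\<phi> i)"
    and gcont: "\<And>i. i \<in> I \<Longrightarrow> continuous_on {y. \<phi> i y = 0} (\<gamma> i)"
    and ngpos: "\<And>i y. i \<in> I \<Longrightarrow> \<phi> i y = 0 \<Longrightarrow> nrm \<phi> i y \<bullet> \<gamma> i y > 0"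
    using assms(1) unfolding piecewise_C1_cont_refl_def G_def by auto
  have phidiff: "\<And>i y. i \<in> I \<Longrightarrow> \<phi> i differentiable (at y)"
    using C1 unfolding C1_on_def differentiable_on_def by auto
  have phicont: "\<And>i. i \<in> I \<Longrightarrow> continuous_on UNIV (\<phi> i)"
    using C1 unfolding C1_on_def using differentiable_imp_continuous_on by blast
  have clG: "\<And>y i. y \<in> closure G \<Longrightarrow> i \<in> I \<Longrightarrow> \<phi> i y \<ge> 0"
  proof -
    have "closure G \<subseteq> (\<Inter>i\<in>I. {y. 0 \<le> \<phi> i y})"
    proof (rule closure_minimal)
      show "G \<subseteq> (\<Inter>i\<in>I. {y. 0 \<le> \<phi> i y})" unfolding G_def Gdom_def by (auto intro: less_imp_le)
      show "closed (\<Inter>i\<in>I. {y. 0 \<le> \<phi> i y})"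
        by (intro closed_INT ballI closed_Collect_le continuous_on_const phicont)
    qed
    then show "\<And>y i. y \<in> closure G \<Longrightarrow> i \<in> I \<Longrightarrow> \<phi> i y \<ge> 0" by blast
  qed
  have frcl: "frontier G \<subseteq> closure G" by (simp add: frontier_def)
  have xcl: "x \<in> closure G" using xF frcl G_def by auto
  have xU: "x \<in> Uset I \<phi> \<gamma>" using assms(4) xF unfolding assumption2'_def by auto
  then obtain n where n_nc: "n \<in> ncone I \<phi> x"
      and npos: "\<forall>d\<in>dcone I \<phi> \<gamma> x - {0}. n \<bullet> d > 0"
    unfolding Uset_def by auto
  then obtain s where s0: "\<forall>i. s i \<ge> 0" and ns: "n = (\<Sum>i\<in>Iset I \<phi> x. s i *\<^sub>R nrm \<phi> i x)"
    unfolding ncone_def by auto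
  have IxI: "Iset I \<phi> x \<subseteq> I" unfolding Iset_def by auto
  have finIx: "finite (Iset I \<phi> x)" using fin IxI finite_subset by blast
  have ngam: "n \<bullet> \<gamma> i x > 0" if i: "i \<in> Iset I \<phi> x" for i
  proof -
    have "(\<Sum>j\<in>Iset I \<phi> x. (if j = i then 1 else 0) *\<^sub>R \<gamma> j x) = (\<Sum>j\<in>Iset I \<phi> x. (if j = i then \<gamma> j x else 0))"
      by (rule sum.cong) auto
    also have "\<dots> = \<gamma> i x" using i finIx by simp
    finally have "\<gamma> i x \<in> dcone I \<phi> \<gamma> x" unfolding dcone_def
      by (intro CollectI exI[of _ "\<lambda>j. if j = i then 1 else (0::real)"]) auto
    moreover have "\<gamma> i x \<noteq> 0" using ngpos[of i x] i unfolding Iset_def by auto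
    ultimately show ?thesis using npos by auto
  qed

  have "\<exists>c>0. \<forall>i\<in>Iset I \<phi> x. eventually (\<lambda>y. \<phi> i y = 0 \<longrightarrow> c * norm (\<gamma> i y) \<le> n \<bullet> \<gamma> i y) (nhds x)"
  proof (rule finite_pos_choice[OF finIx])
    show "\<forall>i\<in>Iset I \<phi> x. \<exists>c>0. eventually (\<lambda>y. \<phi> i y = 0 \<longrightarrow> c * norm (\<gamma> i y) \<le> n \<bullet> \<gamma> i y) (nhds x)"
    proof
      fix i assume i: "i \<in> Iset I \<phi> x"
      have iI: "i \<in> I" and x0: "\<phi> i x = 0" using i unfolding Iset_def by auto
      have gx: "\<gamma> i x \<noteq> 0" using ngpos[OF iI x0] by auto
      define ci where "ci = (n \<bullet> \<gamma> i x) / (2 * norm (\<gamma> i x))"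
      have ci: "ci > 0" using ngam[OF i] gx unfolding ci_def by simp
      define f where "f = (\<lambda>y. n \<bullet> \<gamma> i y - ci * norm (\<gamma> i y))"
      have fc: "continuous_on {y. \<phi> i y = 0} f" unfolding f_def
        by (intro continuous_intros gcont[OF iI])
      have fx: "f x = (n \<bullet> \<gamma> i x) / 2" using gx unfolding f_def ci_def by simp
      then have fxp: "f x > 0" using ngam[OF i] by simp
      obtain d where d: "d > 0" "\<forall>y\<in>{y. \<phi> i y = 0}. dist y x < d \<longrightarrow> dist (f y) (f x) < f x"
        using fc x0 fxp unfolding continuous_on_iff by blast
      have "eventually (\<lambda>y. \<phi> i y = 0 \<longrightarrow> ci * norm (\<gamma> i y) \<le> n \<bullet> \<gamma> i y) (nhds x)"
        unfolding eventually_nhds_metric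
      proof (intro exI[of _ d] conjI allI impI)
        fix y assume "dist y x < d" "\<phi> i y = 0"
        then have "dist (f y) (f x) < f x" using d by auto
        then have "f y > 0" by (auto simp: dist_real_def)
        then show "ci * norm (\<gamma> i y) \<le> n \<bullet> \<gamma> i y" unfolding f_def by simp
      qed (use d in auto)
      then show "\<exists>c>0. eventually (\<lambda>y. \<phi> i y = 0 \<longrightarrow> c * norm (\<gamma> i y) \<le> n \<bullet> \<gamma> i y) (nhds x)"
        using ci by blast
    qed
  next
    fix i and c c' :: real
    assume "0 < c'" "c' \<le> c" "eventually (\<lambda>y. \<phi> i y = 0 \<longrightarrow> c * norm (\<gamma> i y) \<le> n \<bullet> \<gamma> i y) (nhds x)"
    then show "eventually (\<lambda>y. \<phi> i y = 0 \<longrightarrow> c' * norm (\<gamma> i y) \<le> n \<bullet> \<gamma> i y) (nhds x)"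
      by (elim eventually_mono) (meson mult_right_mono norm_ge_zero order_trans)
  qed
  then obtain c where c0: "c > 0"
    and cev: "\<forall>i\<in>Iset I \<phi> x. eventually (\<lambda>y. \<phi> i y = 0 \<longrightarrow> c * norm (\<gamma> i y) \<le> n \<bullet> \<gamma> i y) (nhds x)"
    by blast
  have epsb: "eventually (\<lambda>y. y \<in> closure G \<longrightarrow> - (\<epsilon> * norm (y - x)) \<le> n \<bullet> (y - x)) (nhds x)"
    if \<epsilon>: "\<epsilon> > 0" for \<epsilon>
  proof -
    define K0 where "K0 = (\<Sum>i\<in>Iset I \<phi> x. s i * inverse (norm (grad (\<phi> i) x)))"
    have K0: "K0 \<ge> 0" unfolding K0_def using s0 by (intro sum_nonneg) auto
    define e where "e = \<epsilon> / (K0 + 1)"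
    have e: "e > 0" using \<epsilon> K0 unfolding e_def by simp
    have eK: "e * K0 \<le> \<epsilon>"
    proof -
      have "e * K0 = \<epsilon> * (K0 / (K0 + 1))" unfolding e_def by simp
      also have "\<dots> \<le> \<epsilon> * 1" using K0 \<epsilon> by (intro mult_left_mono) auto
      finally show ?thesis by simp
    qed
    have each: "\<forall>i\<in>Iset I \<phi> x. eventually (\<lambda>y. y \<in> closure G \<longrightarrow> - (e * norm (y - x)) \<le> grad (\<phi> i) x \<bullet> (y - x)) (nhds x)"
    proof
      fix i assume i: "i \<in> Iset I \<phi> x"
      have iI: "i \<in> I" and x0: "\<phi> i x = 0" using i unfolding Iset_def by auto
      have "(\<phi> i has_derivative frechet_derivative (\<phi> i) (at x)) (at x)"
        using phidiff[OF iI] frechet_derivative_works by blast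
      then obtain d where d: "d > 0" "\<forall>y. norm (y - x) < d \<longrightarrow>
          norm (\<phi> i y - \<phi> i x - frechet_derivative (\<phi> i) (at x) (y - x)) \<le> e * norm (y - x)"
        unfolding has_derivative_at_alt using e by blast
      show "eventually (\<lambda>y. y \<in> closure G \<longrightarrow> - (e * norm (y - x)) \<le> grad (\<phi> i) x \<bullet> (y - x)) (nhds x)"
        unfolding eventually_nhds_metric
      proof (intro exI[of _ d] conjI allI impI)
        fix y assume y: "dist y x < d" "y \<in> closure G"
        have "norm (\<phi> i y - \<phi> i x - frechet_derivative (\<phi> i) (at x) (y - x)) \<le> e * norm (y - x)"
          using d y by (simp add: dist_norm)
        moreover have "frechet_derivative (\<phi> i) (at x) (y - x) = grad (\<phi> i) x \<bullet> (y - x)"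
          by (rule lin_grad[OF phidiff[OF iI]])
        moreover have "\<phi> i y \<ge> 0" using clG[OF y(2) iI] .
        ultimately show "- (e * norm (y - x)) \<le> grad (\<phi> i) x \<bullet> (y - x)"
          using x0 by (simp add: abs_le_iff)
      qed (use d in auto)
    qed
    have "eventually (\<lambda>y. \<forall>i\<in>Iset I \<phi> x. y \<in> closure G \<longrightarrow> - (e * norm (y - x)) \<le> grad (\<phi> i) x \<bullet> (y - x)) (nhds x)"
      by (rule eventually_ball_finite[OF finIx each])
    then show ?thesis
    proof (rule eventually_mono, intro impI)
      fix y assume H: "\<forall>i\<in>Iset I \<phi> x. y \<in> closure G \<longrightarrow> - (e * norm (y - x)) \<le> grad (\<phi> i) x \<bullet> (y - x)"
        and y: "y \<in> closure G"
      have "n \<bullet> (y - x) = (\<Sum>i\<in>Iset I \<phi> x. s i * (inverse (norm (grad (\<phi> i) x)) * (grad (\<phi> i) x \<bullet> (y - x))))"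
        unfolding ns nrm_def by (simp add: inner_sum_left divide_inverse_commute mult.assoc)
      also have "\<dots> \<ge> (\<Sum>i\<in>Iset I \<phi> x. s i * (inverse (norm (grad (\<phi> i) x)) * (- (e * norm (y - x)))))"
        using H y s0 by (intro sum_mono mult_left_mono) auto
      finally have "n \<bullet> (y - x) \<ge> - (e * norm (y - x) * K0)"
        unfolding K0_def by (simp add: sum_distrib_left sum_distrib_right sum_negf algebra_simps)
      moreover have "(e * norm (y - x)) * K0 \<le> \<epsilon> * norm (y - x)"
        using eK by (metis mult.commute mult.left_commute mult_right_mono norm_ge_zero)
      ultimately show "- (\<epsilon> * norm (y - x)) \<le> n \<bullet> (y - x)" by linarith
    qed
  qed
  have Ic: "eventually (\<lambda>y. \<forall>j\<in>I. \<phi> j x \<noteq> 0 \<longrightarrow> \<phi> j y \<noteq> 0) (nhds x)"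
  proof (rule eventually_ball_finite[OF fin], intro ballI)
    fix j assume j: "j \<in> I"
    show "eventually (\<lambda>y. \<phi> j x \<noteq> 0 \<longrightarrow> \<phi> j y \<noteq> 0) (nhds x)"
    proof (cases "\<phi> j x = 0")
      case False
      have "open {y. \<phi> j y \<noteq> 0}" by (intro open_Collect_neq phicont[OF j] continuous_on_const)
      then show ?thesis unfolding eventually_nhds using False by (intro exI[of _ "{y. \<phi> j y \<noteq> 0}"]) auto
    qed simp
  qed
  have "eventually (\<lambda>y. (\<forall>i\<in>Iset I \<phi> x. \<phi> i y = 0 \<longrightarrow> c * norm (\<gamma> i y) \<le> n \<bullet> \<gamma> i y)
      \<and> (y \<in> closure G \<longrightarrow> - ((c/4) * norm (y - x)) \<le> n \<bullet> (y - x))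
      \<and> (\<forall>j\<in>I. \<phi> j x \<noteq> 0 \<longrightarrow> \<phi> j y \<noteq> 0)) (nhds x)"
    using eventually_ball_finite[OF finIx cev] epsb[of "c/4"] c0 Ic by (auto intro: eventually_conj)
  then obtain \<rho> where \<rho>0: "\<rho> > 0" and \<rho>: "\<And>y. dist y x < \<rho> \<Longrightarrow>
      (\<forall>i\<in>Iset I \<phi> x. \<phi> i y = 0 \<longrightarrow> c * norm (\<gamma> i y) \<le> n \<bullet> \<gamma> i y)
      \<and> (y \<in> closure G \<longrightarrow> - ((c/4) * norm (y - x)) \<le> n \<bullet> (y - x))
      \<and> (\<forall>j\<in>I. \<phi> j x \<noteq> 0 \<longrightarrow> \<phi> j y \<noteq> 0)"
    unfolding eventually_nhds_metric by blast

  define a0 where "a0 = 4 / c"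
  define N where "N = norm n"
  define M where "M = a0 * N + 4"
  define J where "J = real CARD('n)"
  have a0: "a0 > 0" using c0 unfolding a0_def by simp
  have a0c: "a0 * c = 4" using c0 unfolding a0_def by simp
  have N0: "N \<ge> 0" unfolding N_def by simp
  have aN0: "a0 * N \<ge> 0" using a0 N0 by simp
  then have aN2: "a0 * N + 2 > 0" by linarith
  from aN0 have M0: "M > 0" unfolding M_def by linarith
  define S where "S = V \<union> (\<Union>i\<in>I - Iset I \<phi> x. frontier G \<inter> {y. \<phi> i y = 0})"
  have Scl: "closed S"
  proof -
    have "finite V" using assms(4) unfolding assumption2'_def by auto
    then have "closed V" by (rule finite_imp_closed)
    moreover have zc: "closed {y. \<phi> i y = 0}" if "i \<in> I" for i
      using closed_Collect_eq[OF phicont[OF that] continuous_on_const] by simp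
    moreover have "closed (\<Union>i\<in>I - Iset I \<phi> x. frontier G \<inter> {y. \<phi> i y = 0})"
      using fin zc by (intro closed_UN ballI closed_Int frontier_closed) auto
    ultimately show ?thesis unfolding S_def by auto
  qed
  have xS: "x \<notin> S" using xF unfolding S_def Iset_def by auto
  define D where "D = (if S = {} then 1 else infdist x S)"
  have D0: "D > 0" unfolding D_def using infdist_pos_not_in_closed[OF Scl _ xS] by auto
  define rx where "rx = min (\<rho> / (a0 * N + 2)) (D / 2)"
  have rx0: "rx > 0" unfolding rx_def using \<rho>0 D0 aN2 by simp
  have rx\<rho>: "rx * (a0 * N + 2) \<le> \<rho>"
  proof -
    have "rx \<le> \<rho> / (a0 * N + 2)" unfolding rx_def by (rule min.cobounded1)
    then show ?thesis using aN2 by (simp add: pos_le_divide_eq)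
  qed
  have rxl\<rho>: "rx < \<rho>"
  proof -
    have "rx * 1 < rx * (a0 * N + 2)" using rx0 aN0 by (intro mult_strict_left_mono) auto
    then show ?thesis using rx\<rho> by simp
  qed
  define A where "A = J^2 * (1440 * M^2 + 960) + 240 * M + 1"
  have J0: "J \<ge> 0" unfolding J_def by simp
  have A1: "A \<ge> 1" unfolding A_def using J0 M0 by (simp add: add_nonneg_nonneg)
  have A0: "0 < A" using A1 by simp
  have AM: "240 * M \<le> A" unfolding A_def using J0 by simp
  define g where "g = (\<lambda>r y. hh (qf x n (a0/r) (2/r^2) y))"
  have supp: "norm (y - x) \<le> r"
    if r: "0 < r" "r \<le> rx" and y: "y \<in> closure G" and q: "qf x n (a0/r) (2/r^2) y \<le> 1" for r y
  proof (rule ccontr)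
    assume "\<not> norm (y - x) \<le> r"
    then have t1: "norm (y - x) / r > 1" using r by simp
    show False
    proof (cases "norm (y - x) < \<rho>")
      case True
      then have "- ((c/4) * norm (y - x)) \<le> n \<bullet> (y - x)" using \<rho>[of y] y by (simp add: dist_norm)
      then have "a0/r * (- ((c/4) * norm (y - x))) \<le> a0/r * (n \<bullet> (y - x))"
        using a0 r by (intro mult_left_mono) auto
      moreover have "a0/r * (- ((c/4) * norm (y - x))) = - (norm (y - x) / r)"
        using a0c r by (simp add: field_simps)
      ultimately have "qf x n (a0/r) (2/r^2) y \<ge> 2 * (norm (y - x)/r)^2 - norm (y - x) / r"
        unfolding qf_t[OF r(1)] by linarith
      then show False using ar1[OF t1] q by linarith
    next
      case False
      have "r * (a0 * N + 2) \<le> \<rho>" using rx\<rho> r aN0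
        by (smt (verit) mult_right_mono)
      also have "\<rho> \<le> norm (y - x)" using False by simp
      finally have "a0 * N + 2 \<le> norm (y - x) / r" using r by (simp add: field_simps)
      then have "2 * (norm (y - x)/r)^2 - (a0 * N) * (norm (y - x)/r) > 1"
        using aN0 by (intro ar2) auto
      moreover have "qf x n (a0/r) (2/r^2) y \<ge> 2*(norm (y-x)/r)^2 - a0*norm n*(norm (y-x)/r)"
        using qf_lower[OF r(1), of a0] a0 by simp
      ultimately show False using q unfolding N_def by linarith
    qed
  qed
  have gradg: "grad (g r) y = h1 (qf x n (a0/r) (2/r^2) y) *\<^sub>R uv x n (a0/r) (2/r^2) y" for r y
    unfolding g_def by (rule grad_g)
  have hessg: "hess (g r) y $ i $ j = h2 (qf x n (a0/r) (2/r^2) y) * (uv x n (a0/r) (2/r^2) y $ i) * (uv x n (a0/r) (2/r^2) y $ j)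
    + h1 (qf x n (a0/r) (2/r^2) y) * (2 * (2/r^2)) * (if i = j then 1 else 0)" for r y i j
    unfolding g_def by (rule hess_g)
  have main: "C2c_closure G (g r) \<and>
          (\<forall>y\<in>closure G. g r y \<ge> 0) \<and>
          closure {y. g r y \<noteq> 0} \<inter> closure G \<subseteq> cball x r \<inter> closure G \<and>
          (\<exists>\<delta>>0. \<forall>y\<in>cball x \<delta> \<inter> closure G. g r y = 1) \<and>
          (r < rx \<longrightarrow>
             (\<forall>y\<in>closure G. \<bar>g r y\<bar> \<le> A) \<and>
             (\<forall>y\<in>closure G. norm (grad (g r) y) \<le> A / r) \<and>
             (\<exists>B < A / r\<^sup>2. \<forall>y\<in>closure G.
                 (\<Sum>i\<in>UNIV. \<Sum>j\<in>UNIV. \<bar>hess (g r) y $ i $ j\<bar>) \<le> B)) \<and>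
          (\<forall>y\<in>frontier G. \<forall>d\<in>dcone I \<phi> \<gamma> y. d \<bullet> grad (g r) y \<le> 0)"
    if r: "0 < r" "r \<le> rx" for r
  proof (intro conjI)
    have far: "\<forall>y\<in>UNIV - cball x (r * (a0 * N + 2)). g r y = 0"
    proof
      fix y assume "y \<in> UNIV - cball x (r * (a0 * N + 2))"
      then have "r * (a0 * N + 2) < norm (y - x)" by (simp add: dist_norm norm_minus_commute)
      then have "a0 * N + 2 \<le> norm (y - x) / r" using r by (simp add: field_simps)
      then have "2 * (norm (y - x)/r)^2 - (a0 * N) * (norm (y - x)/r) > 1"
        using aN0 by (intro ar2) auto
      moreover have "qf x n (a0/r) (2/r^2) y \<ge> 2*(norm (y-x)/r)^2 - a0*norm n*(norm (y-x)/r)"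
        using qf_lower[OF r(1), of a0] a0 by simp
      ultimately have "qf x n (a0/r) (2/r^2) y \<ge> 1" unfolding N_def by linarith
      then show "g r y = 0" unfolding g_def by (rule hh_hi)
    qed
    have c2: "C2_on UNIV (g r)" unfolding g_def by (rule C2_g)
    show "C2c_closure G (g r)"
      unfolding C2c_closure_def
      by (rule exI[of _ UNIV], rule exI[of _ "cball x (r * (a0 * N + 2))"]) (use far c2 in auto)
    show "\<forall>y\<in>closure G. g r y \<ge> 0" unfolding g_def using hh_nonneg by auto
    show "closure {y. g r y \<noteq> 0} \<inter> closure G \<subseteq> cball x r \<inter> closure G"
    proof -
      have "closure {y. g r y \<noteq> 0} \<subseteq> {y. qf x n (a0/r) (2/r^2) y \<le> 1}"
      proof (rule closure_minimal)
        show "{y. g r y \<noteq> 0} \<subseteq> {y. qf x n (a0/r) (2/r^2) y \<le> 1}"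
        proof
          fix y assume "y \<in> {y. g r y \<noteq> 0}"
          then have "hh (qf x n (a0/r) (2/r^2) y) \<noteq> 0" unfolding g_def by simp
          then have "\<not> qf x n (a0/r) (2/r^2) y \<ge> 1" using hh_hi by blast
          then show "y \<in> {y. qf x n (a0/r) (2/r^2) y \<le> 1}" by simp
        qed
        show "closed {y. qf x n (a0/r) (2/r^2) y \<le> 1}"
          by (rule closed_Collect_le[OF qf_cont continuous_on_const])
      qed
      then show ?thesis using supp[OF r] by (auto simp: dist_norm norm_minus_commute)
    qed
    show "\<exists>\<delta>>0. \<forall>y\<in>cball x \<delta> \<inter> closure G. g r y = 1"
    proof (intro exI[of _ "r / (4 * (a0 * N + 1))"] conjI ballI)
      show "r / (4 * (a0 * N + 1)) > 0" using r aN0 by simp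
      fix y assume "y \<in> cball x (r / (4 * (a0 * N + 1))) \<inter> closure G"
      then have "norm (y - x) \<le> r / (4 * (a0 * N + 1))" by (simp add: dist_norm norm_minus_commute)
      then have "norm (y - x) / r * (4 * (a0 * N + 1)) \<le> 1" using r aN0
        by (simp add: field_simps)
      then have "2 * (norm (y - x) / r)^2 + (a0 * N) * (norm (y - x) / r) \<le> 1/2"
        using aN0 r by (intro ar3) auto
      moreover have "qf x n (a0/r) (2/r^2) y \<le> 2*(norm (y-x)/r)^2 + a0*norm n*(norm (y-x)/r)"
        using qf_upper[OF r(1), of a0] a0 by simp
      ultimately have "qf x n (a0/r) (2/r^2) y \<le> 1/2" unfolding N_def by linarith
      then show "g r y = 1" unfolding g_def by (rule hh_lo)
    qed
    let ?q = "qf x n (a0/r) (2/r^2)"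
    let ?u = "uv x n (a0/r) (2/r^2)"
    have inreg: "norm (y - x) \<le> r \<and> norm (?u y) \<le> M / r"
      if y: "y \<in> closure G" and qq: "1/2 < ?q y \<and> ?q y < 1" for y
    proof -
      have nr: "norm (y - x) \<le> r" using supp[OF r y] qq by simp
      have "norm (?u y) \<le> (a0 * norm n + 4) / r" using uv_bd[OF r(1) _ nr, of a0 n] a0 by simp
      then show ?thesis using nr unfolding M_def N_def by simp
    qed
    show "r < rx \<longrightarrow>
             (\<forall>y\<in>closure G. \<bar>g r y\<bar> \<le> A) \<and>
             (\<forall>y\<in>closure G. norm (grad (g r) y) \<le> A / r) \<and>
             (\<exists>B < A / r\<^sup>2. \<forall>y\<in>closure G.
                 (\<Sum>i\<in>UNIV. \<Sum>j\<in>UNIV. \<bar>hess (g r) y $ i $ j\<bar>) \<le> B)"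
    proof (intro impI conjI)
      show "\<forall>y\<in>closure G. \<bar>g r y\<bar> \<le> A"
        using hh_nonneg hh_le1 A1 unfolding g_def by (metis abs_of_nonneg order_trans)
      show "\<forall>y\<in>closure G. norm (grad (g r) y) \<le> A / r"
      proof
        fix y assume y: "y \<in> closure G"
        show "norm (grad (g r) y) \<le> A / r"
        proof (cases "1/2 < ?q y \<and> ?q y < 1")
          case True
          have "norm (grad (g r) y) = \<bar>h1 (?q y)\<bar> * norm (?u y)" unfolding gradg by simp
          also have "\<dots> \<le> 240 * (M / r)"
            using inreg[OF y True] h1_bd by (intro mult_mono) auto
          also have "\<dots> = (240 * M) / r" by simp
          also have "\<dots> \<le> A / r" using r AM by (intro divide_right_mono) auto
          finally show ?thesis .
        next
          case False
          then have "h1 (?q y) = 0" by (intro h1_out) auto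
          then show ?thesis unfolding gradg using A1 r by simp
        qed
      qed
      define E where "E = (1440 * M^2 + 960) / r^2"
      show "\<exists>B < A / r\<^sup>2. \<forall>y\<in>closure G.
                 (\<Sum>i\<in>UNIV. \<Sum>j\<in>UNIV. \<bar>hess (g r) y $ i $ j\<bar>) \<le> B"
      proof (intro exI[of _ "J^2 * E"] conjI ballI)
        show "J^2 * E < A / r^2" unfolding E_def A_def using r M0
          by (simp add: divide_strict_right_mono)
        fix y assume y: "y \<in> closure G"
        have entry: "\<bar>hess (g r) y $ i $ j\<bar> \<le> E" for i j
        proof (cases "1/2 < ?q y \<and> ?q y < 1")
          case True
          have ui: "\<bar>?u y $ i\<bar> \<le> M / r" and uj: "\<bar>?u y $ j\<bar> \<le> M / r"
            using inreg[OF y True] component_le_norm_cart order_trans by blast+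
          have "\<bar>hess (g r) y $ i $ j\<bar> \<le> 1440 * (M/r)^2 + 240 * (2 * (2/r^2))"
            unfolding hessg by (rule entry_bd[OF h2_bd h1_bd ui uj]) auto
          also have "\<dots> = E" unfolding E_def by (simp add: power_divide add_divide_distrib)
          finally show ?thesis .
        next
          case False
          then have "h1 (?q y) = 0" "h2 (?q y) = 0" by (auto intro: h1_out h2_out)
          then show ?thesis unfolding hessg E_def by simp
        qed
        have "(\<Sum>i\<in>UNIV. \<Sum>j\<in>UNIV. \<bar>hess (g r) y $ i $ j\<bar>) \<le> (\<Sum>i\<in>(UNIV::'n set). \<Sum>j\<in>(UNIV::'n set). E)"
          by (intro sum_mono entry)
        also have "\<dots> = J^2 * E" unfolding J_def by (simp add: power2_eq_square)
        finally show "(\<Sum>i\<in>UNIV. \<Sum>j\<in>UNIV. \<bar>hess (g r) y $ i $ j\<bar>) \<le> J^2 * E" .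
      qed
    qed
    show "\<forall>y\<in>frontier G. \<forall>d\<in>dcone I \<phi> \<gamma> y. d \<bullet> grad (g r) y \<le> 0"
    proof (intro ballI)
      fix y d assume yF: "y \<in> frontier G" and d: "d \<in> dcone I \<phi> \<gamma> y"
      obtain t where t0: "\<forall>i. t i \<ge> 0" and dt: "d = (\<Sum>i\<in>Iset I \<phi> y. t i *\<^sub>R \<gamma> i y)"
        using d unfolding dcone_def by auto
      have dg: "d \<bullet> grad (g r) y = h1 (?q y) * (d \<bullet> ?u y)" unfolding gradg by simp
      show "d \<bullet> grad (g r) y \<le> 0"
      proof (cases "1/2 < ?q y \<and> ?q y < 1")
        case False
        then have "h1 (?q y) = 0" by (intro h1_out) auto
        then show ?thesis unfolding dg by simp
      next
        case True
        have ycl: "y \<in> closure G" using yF frcl by auto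
        have nr: "norm (y - x) \<le> r" using inreg[OF ycl True] by simp
        have dyx: "dist y x < \<rho>" using nr r rxl\<rho> by (simp add: dist_norm)
        note \<rho>y = \<rho>[OF dyx]
        have each: "\<gamma> i y \<bullet> ?u y \<ge> 0" if i: "i \<in> Iset I \<phi> y" for i
        proof -
          have iI: "i \<in> I" and y0: "\<phi> i y = 0" using i unfolding Iset_def by auto
          have ix: "i \<in> Iset I \<phi> x"
          proof (rule ccontr)
            assume "i \<notin> Iset I \<phi> x"
            then have "\<phi> i x \<noteq> 0" using iI unfolding Iset_def by auto
            then show False using \<rho>y iI y0 by auto
          qed
          have cg: "c * norm (\<gamma> i y) \<le> n \<bullet> \<gamma> i y" using \<rho>y ix y0 by auto
          have "?u y \<bullet> \<gamma> i y = a0 / r * (n \<bullet> \<gamma> i y) + (4 / r^2) * ((y - x) \<bullet> \<gamma> i y)"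
            unfolding uv_def by (simp add: inner_add_left)
          moreover have "a0 / r * (c * norm (\<gamma> i y)) \<le> a0 / r * (n \<bullet> \<gamma> i y)"
            using cg a0 r by (intro mult_left_mono) auto
          moreover have "a0 / r * (c * norm (\<gamma> i y)) = 4 / r * norm (\<gamma> i y)"
            using a0c by (simp add: field_simps)
          moreover have "- (norm (y - x) * norm (\<gamma> i y)) \<le> (y - x) \<bullet> \<gamma> i y"
            using Cauchy_Schwarz_ineq2[of "y - x" "\<gamma> i y"] by (simp add: abs_le_iff)
          moreover have "norm (y - x) * norm (\<gamma> i y) \<le> r * norm (\<gamma> i y)"
            using nr by (intro mult_right_mono) auto
          ultimately have "?u y \<bullet> \<gamma> i y \<ge> 4 / r * norm (\<gamma> i y) + (4 / r^2) * (- (r * norm (\<gamma> i y)))"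
            using r by (smt (verit) mult_left_mono zero_le_divide_iff zero_le_power2)
          also have "4 / r * norm (\<gamma> i y) + (4 / r^2) * (- (r * norm (\<gamma> i y))) = 0"
            using r by (simp add: power2_eq_square field_simps)
          finally show ?thesis by (simp add: inner_commute)
        qed
        have "d \<bullet> ?u y = (\<Sum>i\<in>Iset I \<phi> y. t i * (\<gamma> i y \<bullet> ?u y))"
          unfolding dt by (simp add: inner_sum_left)
        also have "\<dots> \<ge> 0" using t0 each by (intro sum_nonneg mult_nonneg_nonneg) auto
        finally have "d \<bullet> ?u y \<ge> 0" .
        then show ?thesis unfolding dg using h1_nonpos by (simp add: mult_nonpos_nonneg)
      qed
    qed
  qed
  have Spart: "S \<noteq> {} \<longrightarrow> rx < infdist x S"
  proof
    assume "S \<noteq> {}"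
    then have "D = infdist x S" unfolding D_def by simp
    moreover have "rx \<le> D / 2" unfolding rx_def by (rule min.cobounded2)
    ultimately show "rx < infdist x S" using D0 by simp
  qed
  show "\<exists>rx A (g :: real \<Rightarrow> real^'n \<Rightarrow> real).
       0 < rx \<and>
       (let S = V \<union> (\<Union>i\<in>I - Iset I \<phi> x. frontier (Gdom I \<phi>) \<inter> {y. \<phi> i y = 0})
        in S \<noteq> {} \<longrightarrow> rx < infdist x S) \<and>
       0 < A \<and>
       (\<forall>r. 0 < r \<and> r \<le> rx \<longrightarrow>
          C2c_closure (Gdom I \<phi>) (g r) \<and>
          (\<forall>y\<in>closure (Gdom I \<phi>). g r y \<ge> 0) \<and>
          closure {y. g r y \<noteq> 0} \<inter> closure (Gdom I \<phi>) \<subseteq> cball x r \<inter> closure (Gdom I \<phi>) \<and>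
          (\<exists>\<delta>>0. \<forall>y\<in>cball x \<delta> \<inter> closure (Gdom I \<phi>). g r y = 1) \<and>
          (r < rx \<longrightarrow>
             (\<forall>y\<in>closure (Gdom I \<phi>). \<bar>g r y\<bar> \<le> A) \<and>
             (\<forall>y\<in>closure (Gdom I \<phi>). norm (grad (g r) y) \<le> A / r) \<and>
             (\<exists>B < A / r\<^sup>2. \<forall>y\<in>closure (Gdom I \<phi>).
                 (\<Sum>i\<in>UNIV. \<Sum>j\<in>UNIV. \<bar>hess (g r) y $ i $ j\<bar>) \<le> B)) \<and>
          (\<forall>y\<in>frontier (Gdom I \<phi>). \<forall>d\<in>dcone I \<phi> \<gamma> y. d \<bullet> grad (g r) y \<le> 0))"
    unfolding G_def[symmetric] Let_def S_def[symmetric]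
    apply (rule exI[of _ rx], rule exI[of _ A], rule exI[of _ g])
    apply (intro conjI[OF rx0] conjI[OF Spart] conjI[OF A0] allI impI)
    apply (erule conjE)
    apply (rule main)
    apply assumption+
    done
qed


end
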